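(* Let $R$ be a local ring and $s\in R$ a central element. Then $A\in M_2(R;s)$ is strongly nil clean if and only if one of the following holds: (1) $A\in Nil\big(M_2(R;s)\big)$; (2) $I_2-A\in Nil\big(M_2(R;s)\big)$; (3) $s\in U(R)$ and $A$ is similar to $\left[\begin{smallmatrix} v&0\\ 0&w\end{smallmatrix}\right]$ for some $v\in 1+Nil(R)$, $w\in Nil(R)$; (4) $s\in J(R)$ and $A$ is similar to $\left[\begin{smallmatrix} v&0\\ 0&w\end{smallmatrix}\right]$ or to $\left[\begin{smallmatrix} w&0\\ 0&v\end{smallmatrix}\right]$ for some $v\in 1+Nil(R)$, $w\in Nil(R)$.
   Context: All rings are associative with identity. A ring $R$ is local if $R/J(R)$ is a division ring, where $J(R)$ is the Jacobson radical; $U(R)$ is the group of units and $Nil(T)$ the set of nilpotent elements of a ring $T$. For a ring $R$ and a central element $s\in R$, $M_2(R;s)$ denotes the ring whose elements are the $2\times 2$ arrays $\left[\begin{smallmatrix} a&b\\ c&d\end{smallmatrix}\right]$ with $a,b,c,d\in R$, with componentwise addition and multiplication $\left[\begin{smallmatrix} a&b\\ c&d\end{smallmatrix}\right]\left[\begin{smallmatrix} a'&b'\\ c'&d'\end{smallmatrix}\right]=\left[\begin{smallmatrix} aa'+s^2bc'&ab'+bd'\\ ca'+dc'&s^2cb'+dd'\end{smallmatrix}\right]$, with identity $I_2$. Two elements $A,B\in M_2(R;s)$ are similar if $B=P^{-1}AP$ for some unit $P$ of $M_2(R;s)$. An element $a$ of a ring $T$ is strongly nil clean if there is an idempotent $e\in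 T$ with $ae=ea$ and $a-e\in Nil(T)$. *)

theory Defs
  imports Main
begin

definition is_unit :: "'a::ring_1 \<Rightarrow> bool" where
  "is_unit x \<longleftrightarrow> (\<exists>y. x * y = 1 \<and> y * x = 1)"

definition nilpotent :: "'a::ring_1 \<Rightarrow> bool" where
  "nilpotent x \<longleftrightarrow> (\<exists>n. x ^ n = 0)"

definition central :: "'a::ring_1 \<Rightarrow> bool" where
  "central s \<longleftrightarrow> (\<forall>r. s * r = r * s)"

definition left_ideal :: "'a::ring_1 set \<Rightarrow> bool" where
  "left_ideal I \<longleftrightarrow> 0 \<in> I \<and> (\<forall>x\<in>I. \<forall>y\<in>I. x - y \<in> I) \<and> (\<forall>r. \<forall>x\<in>I. r * x \<in> I)"

definition maximal_left_ideal :: "'a::ring_1 set \<Rightarrow> bool" where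
  "maximal_left_ideal M \<longleftrightarrow> left_ideal M \<and> M \<noteq> UNIV \<and>
     (\<forall>I. left_ideal I \<and> M \<subseteq> I \<and> I \<noteq> UNIV \<longrightarrow> I = M)"

definition jacobson :: "'a::ring_1 set" where
  "jacobson = \<Inter> {M. maximal_left_ideal M}"

text \<open>R is local iff R/J(R) is a division ring (unfolded: nonzero ring in which every
  element outside J has a two-sided inverse modulo J).\<close>
definition local_ring :: "'a::ring_1 itself \<Rightarrow> bool" where
  "local_ring _ \<longleftrightarrow> (1::'a) \<notin> jacobson \<and>
     (\<forall>x::'a. x \<notin> jacobson \<longrightarrow> (\<exists>y. x * y - 1 \<in> jacobson \<and> y * x - 1 \<in> jacobson))"

datatype 'a m2 = M2 'a 'a 'a 'a

fun m2_mult :: "'a::ring_1 \<Rightarrow> 'a m2 \<Rightarrow> 'a m2 \<Rightarrow> 'a m2" where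
  "m2_mult s (M2 a b c d) (M2 a' b' c' d') =
     M2 (a * a' + s^2 * b * c') (a * b' + b * d') (c * a' + d * c') (s^2 * c * b' + d * d')"

fun m2_add :: "'a::ring_1 m2 \<Rightarrow> 'a m2 \<Rightarrow> 'a m2" where
  "m2_add (M2 a b c d) (M2 a' b' c' d') = M2 (a + a') (b + b') (c + c') (d + d')"

fun m2_diff :: "'a::ring_1 m2 \<Rightarrow> 'a m2 \<Rightarrow> 'a m2" where
  "m2_diff (M2 a b c d) (M2 a' b' c' d') = M2 (a - a') (b - b') (c - c') (d - d')"

definition m2_zero :: "'a::ring_1 m2" where
  "m2_zero = M2 0 0 0 0"

definition m2_one :: "'a::ring_1 m2" where
  "m2_one = M2 1 0 0 1"

fun m2_pow :: "'a::ring_1 \<Rightarrow> 'a m2 \<Rightarrow> nat \<Rightarrow> 'a m2" where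
  "m2_pow s A 0 = m2_one"
| "m2_pow s A (Suc n) = m2_mult s A (m2_pow s A n)"

definition m2_nilpotent :: "'a::ring_1 \<Rightarrow> 'a m2 \<Rightarrow> bool" where
  "m2_nilpotent s A \<longleftrightarrow> (\<exists>n. m2_pow s A n = m2_zero)"

definition m2_idempotent :: "'a::ring_1 \<Rightarrow> 'a m2 \<Rightarrow> bool" where
  "m2_idempotent s E \<longleftrightarrow> m2_mult s E E = E"

definition m2_strongly_nil_clean :: "'a::ring_1 \<Rightarrow> 'a m2 \<Rightarrow> bool" where
  "m2_strongly_nil_clean s A \<longleftrightarrow>
     (\<exists>E. m2_idempotent s E \<and> m2_mult s A E = m2_mult s E A \<and> m2_nilpotent s (m2_diff A E))"

definition m2_similar :: "'a::ring_1 \<Rightarrow> 'a m2 \<Rightarrow> 'a m2 \<Rightarrow> bool" where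
  "m2_similar s A B \<longleftrightarrow> (\<exists>P Q. m2_mult s P Q = m2_one \<and> m2_mult s Q P = m2_one \<and>
      B = m2_mult s Q (m2_mult s A P))"

end

theory Submission imports Defs begin


lemma UNIV_left_ideal: "left_ideal (UNIV::'a::ring_1 set)"
  by (simp add: left_ideal_def)

lemma jac_left_ideal: "left_ideal (jacobson::'a::ring_1 set)"
  unfolding left_ideal_def jacobson_def maximal_left_ideal_def by auto

lemma left_ideal_one: "left_ideal I \<Longrightarrow> (1::'a::ring_1) \<in> I \<Longrightarrow> I = UNIV"
  unfolding left_ideal_def by (metis UNIV_eq_I mult.right_neutral)

lemma exists_maximal:
  fixes L :: "'a::ring_1 set"
  assumes L: "left_ideal L" "1 \<notin> L"
  shows "\<exists>M. maximal_left_ideal M \<and> L \<subseteq> M"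
proof -
  let ?A = "{I. left_ideal I \<and> L \<subseteq> I \<and> (1::'a) \<notin> I}"
  have "\<forall>C\<in>chains ?A. \<exists>U\<in>?A. \<forall>X\<in>C. X \<subseteq> U"
  proof
    fix C assume C: "C \<in> chains ?A"
    show "\<exists>U\<in>?A. \<forall>X\<in>C. X \<subseteq> U"
    proof (cases "C = {}")
      case True then show ?thesis using L by auto
    next
      case False
      have sub: "C \<subseteq> ?A" and ch: "\<forall>A\<in>C. \<forall>B\<in>C. A \<subseteq> B \<or> B \<subseteq> A"
        using C by (auto simp: chains_def chain_subset_def)
      have "left_ideal (\<Union>C)"
        unfolding left_ideal_def
      proof (intro conjI ballI allI)
        show "0 \<in> \<Union>C" using False sub by (auto simp: left_ideal_def)
      next
        fix x y assume "x \<in> \<Union>C" "y \<in> \<Union>C"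
        then obtain X Y where XY: "X \<in> C" "Y \<in> C" "x \<in> X" "y \<in> Y" by auto
        show "x - y \<in> \<Union>C"
        proof (cases "X \<subseteq> Y")
          case True
          have "left_ideal Y" using XY sub by auto
          then have "x - y \<in> Y" using True XY by (auto simp: left_ideal_def)
          then show ?thesis using XY by auto
        next
          case False then have "Y \<subseteq> X" using ch XY by blast
          have "left_ideal X" using XY sub by auto
          then have "x - y \<in> X" using \<open>Y \<subseteq> X\<close> XY by (auto simp: left_ideal_def)
          then show ?thesis using XY by auto
        qed
      next
        fix r x assume "x \<in> \<Union>C"
        then obtain X where X: "X \<in> C" "x \<in> X" by auto
        have "left_ideal X" using X sub by auto
        then have "r * x \<in> X" using X by (simp add: left_ideal_def)
        then show "r * x \<in> \<Union>C" using X by auto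
      qed
      moreover have "L \<subseteq> \<Union>C" using False sub by auto
      moreover have "1 \<notin> \<Union>C" using sub by auto
      ultimately show ?thesis by blast
    qed
  qed
  from Zorn_Lemma2[OF this] obtain M where M: "M \<in> ?A" "\<forall>X\<in>?A. M \<subseteq> X \<longrightarrow> X = M" by blast
  have "maximal_left_ideal M"
    unfolding maximal_left_ideal_def
  proof (intro conjI allI impI)
    show "left_ideal M" using M by auto
    show "M \<noteq> UNIV" using M by auto
    fix I assume "left_ideal I \<and> M \<subseteq> I \<and> I \<noteq> UNIV"
    then show "I = M" using M left_ideal_one by blast
  qed
  then show ?thesis using M by auto
qed

lemma jac_one_plus_left_inv:
  fixes j :: "'a::ring_1"
  assumes "j \<in> jacobson"
  shows "\<exists>u. u * (1 + j) = 1"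
proof (rule ccontr)
  assume na: "\<not> ?thesis"
  let ?L = "range (\<lambda>r. r * (1 + j))"
  have "left_ideal ?L" unfolding left_ideal_def
  proof (intro conjI ballI allI)
    show "0 \<in> ?L" by (metis mult_zero_left rangeI)
  next
    fix x y assume "x \<in> ?L" "y \<in> ?L"
    then obtain a b where "x = a * (1+j)" "y = b * (1+j)" by auto
    then have "x - y = (a - b) * (1 + j)" by (simp add: left_diff_distrib)
    then show "x - y \<in> ?L" by auto
  next
    fix r x assume "x \<in> ?L"
    then obtain a where "x = a * (1+j)" by auto
    then have "r * x = (r * a) * (1 + j)" by (simp add: mult.assoc)
    then show "r * x \<in> ?L" by auto
  qed
  moreover have "1 \<notin> ?L" using na by auto
  ultimately obtain M where M: "maximal_left_ideal M" "?L \<subseteq> M" using exists_maximal by blast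
  have "j \<in> M" using assms M unfolding jacobson_def by auto
  moreover have "1 + j \<in> M" using M(2) by (metis mult_1 rangeI subsetD)
  moreover have "\<forall>x\<in>M. \<forall>y\<in>M. x - y \<in> M" using M(1) by (simp add: maximal_left_ideal_def left_ideal_def)
  ultimately have "(1 + j) - j \<in> M" by blast
  then have "1 \<in> M" by simp
  then show False using M(1) left_ideal_one by (auto simp: maximal_left_ideal_def)
qed

lemma jac_closed:
  fixes x y r :: "'a::ring_1"
  assumes "x \<in> jacobson" "y \<in> jacobson"
  shows "x - y \<in> jacobson" "r * x \<in> jacobson" "x + y \<in> jacobson" "- x \<in> jacobson"
    "(0::'a::ring_1) \<in> jacobson"
proof -
  have L: "left_ideal (jacobson::'a set)" by (rule jac_left_ideal)
  then show "x - y \<in> jacobson" "r * x \<in> jacobson" "(0::'a) \<in> jacobson"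
    using assms unfolding left_ideal_def by blast+
  have D: "\<forall>x\<in>jacobson. \<forall>y\<in>jacobson. x - y \<in> (jacobson::'a set)" "(0::'a) \<in> jacobson"
    using L unfolding left_ideal_def by blast+
  have my: "0 - y \<in> jacobson" using D assms by blast
  have "x - (0 - y) \<in> jacobson" using D(1) assms(1) my by blast
  then show "x + y \<in> jacobson" by simp
  have "0 - x \<in> jacobson" using D assms by blast
  then show "- x \<in> jacobson" by simp
qed

lemma unit_one_plus_jac:
  fixes j :: "'a::ring_1"
  assumes "j \<in> jacobson"
  shows "is_unit (1 + j)"
proof -
  obtain u where u: "u * (1 + j) = 1" using jac_one_plus_left_inv[OF assms] by blast
  have "u = 1 + (- (u * j))" using u by (simp add: algebra_simps)
  moreover have "- (u * j) \<in> jacobson" using jac_closed(4)[OF jac_closed(2)[OF assms assms, of u] assms] .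
  ultimately obtain w where w: "w * u = 1" using jac_one_plus_left_inv by metis
  have "w = w * (u * (1 + j))" using u by simp
  also have "\<dots> = 1 + j" using w by (simp add: mult.assoc[symmetric])
  finally show ?thesis using u w unfolding is_unit_def by auto
qed

lemma unit_lr: "(l::'a::ring_1) * x = 1 \<Longrightarrow> x * r = 1 \<Longrightarrow> is_unit x"
  unfolding is_unit_def by (metis mult.assoc mult_1 mult.right_neutral)

lemma local_unit:
  fixes x :: "'a::ring_1"
  assumes loc: "local_ring TYPE('a)" and x: "x \<notin> jacobson"
  shows "is_unit x"
proof -
  obtain y where y: "x * y - 1 \<in> jacobson" "y * x - 1 \<in> jacobson"
    using loc x unfolding local_ring_def by blast
  have "is_unit (1 + (x * y - 1))" "is_unit (1 + (y * x - 1))" using y unit_one_plus_jac by blast+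
  then obtain p q where p: "x * y * p = 1" and q: "q * (y * x) = 1" unfolding is_unit_def by auto
  have "(q * y) * x = 1" using q by (simp add: mult.assoc)
  moreover have "x * (y * p) = 1" using p by (simp add: mult.assoc)
  ultimately show ?thesis by (rule unit_lr)
qed

lemma unit_not_jac:
  fixes x :: "'a::ring_1"
  assumes loc: "local_ring TYPE('a)" and x: "is_unit x"
  shows "x \<notin> jacobson"
proof
  assume "x \<in> jacobson"
  moreover obtain y where "y * x = 1" using x unfolding is_unit_def by blast
  ultimately have "1 \<in> (jacobson::'a set)" using jac_closed(2) by (metis (no_types))
  then show False using loc unfolding local_ring_def by simp
qed

lemma jac_right:
  fixes x :: "'a::ring_1"
  assumes loc: "local_ring TYPE('a)" and x: "x \<in> jacobson"
  shows "x * r \<in> jacobson"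
proof (rule ccontr)
  assume "x * r \<notin> jacobson"
  then obtain u where u: "x * r * u = 1" "u * (x * r) = 1" using local_unit[OF loc] unfolding is_unit_def by blast
  have xy: "x * (r * u) = 1" using u by (simp add: mult.assoc)
  show False
  proof (cases "r * u \<in> jacobson")
    case True
    have "x * (r * u) \<in> jacobson" using jac_closed(2)[OF True True, of x] .
    then show False using xy loc unfolding local_ring_def by simp
  next
    case False
    then obtain z where z: "z * (r * u) = 1" "(r * u) * z = 1" using local_unit[OF loc] unfolding is_unit_def by blast
    have "x = x * ((r * u) * z)" using z by simp
    also have "\<dots> = z" using xy by (simp add: mult.assoc[symmetric])
    finally have "x = z" .
    then have "is_unit x" using z xy unfolding is_unit_def by blast
    then show False using unit_not_jac[OF loc] x by blast
  qed
qed

lemma one_minus_jac: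
  fixes x :: "'a::ring_1"
  assumes loc: "local_ring TYPE('a)" and x: "x \<in> jacobson"
  shows "1 - x \<notin> jacobson"
proof
  assume "1 - x \<in> jacobson"
  then have "(1 - x) + x \<in> jacobson" using jac_closed(3)[OF _ x] by blast
  then show False using loc unfolding local_ring_def by simp
qed

lemma one_minus_unit:
  fixes x :: "'a::ring_1"
  assumes loc: "local_ring TYPE('a)" and x: "x \<in> jacobson"
  shows "is_unit (1 - x)"
  using local_unit[OF loc one_minus_jac[OF loc x]] .



lemma central_pow2: "central s \<Longrightarrow> (s::'a::ring_1)^2 * x = x * s^2"
  unfolding central_def power2_eq_square by (metis mult.assoc)

lemma central_pow2': "central s \<Longrightarrow> x * ((s::'a::ring_1)^2 * y) = s^2 * (x * y)"
  using central_pow2[of s x] by (metis mult.assoc)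

definition m2_unit :: "'a::ring_1 \<Rightarrow> 'a m2 \<Rightarrow> bool" where
  "m2_unit s P \<longleftrightarrow> (\<exists>Q. m2_mult s P Q = m2_one \<and> m2_mult s Q P = m2_one)"

lemma m2_one_left[simp]: "m2_mult s m2_one X = X"
  by (cases X) (simp add: m2_one_def)
lemma m2_one_right[simp]: "m2_mult s X m2_one = X"
  by (cases X) (simp add: m2_one_def)
lemma m2_zero_left[simp]: "m2_mult s m2_zero X = m2_zero"
  by (cases X) (simp add: m2_zero_def)
lemma m2_zero_right[simp]: "m2_mult s X m2_zero = m2_zero"
  by (cases X) (simp add: m2_zero_def)
lemma m2_diff_left: "m2_mult s X (m2_diff Y Z) = m2_diff (m2_mult s X Y) (m2_mult s X Z)"
  by (cases X; cases Y; cases Z) (simp add: algebra_simps)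
lemma m2_diff_right: "m2_mult s (m2_diff Y Z) X = m2_diff (m2_mult s Y X) (m2_mult s Z X)"
  by (cases X; cases Y; cases Z) (simp add: algebra_simps)
lemma m2_diff_self[simp]: "m2_diff X X = m2_zero"
  by (cases X) (simp add: m2_zero_def)
lemma m2_diff_zero[simp]: "m2_diff X m2_zero = X"
  by (cases X) (simp add: m2_zero_def)

lemma m2_neg_left: "m2_mult s (m2_diff m2_zero X) Y = m2_diff m2_zero (m2_mult s X Y)"
  by (cases X; cases Y) (simp add: algebra_simps m2_zero_def)
lemma m2_neg_right: "m2_mult s X (m2_diff m2_zero Y) = m2_diff m2_zero (m2_mult s X Y)"
  by (cases X; cases Y) (simp add: algebra_simps m2_zero_def)
lemma m2_neg_neg: "m2_diff m2_zero (m2_diff m2_zero X) = X"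
  by (cases X) (simp add: m2_zero_def)

lemma m2_pow_neg: "m2_pow s (m2_diff m2_zero X) n =
   (if even n then m2_pow s X n else m2_diff m2_zero (m2_pow s X n))"
  by (induction n) (auto simp: m2_neg_left m2_neg_right m2_neg_neg)

lemma m2_nilpotent_neg: "m2_nilpotent s X \<Longrightarrow> m2_nilpotent s (m2_diff m2_zero X)"
  unfolding m2_nilpotent_def using m2_pow_neg by (metis m2_diff_self)

lemma m2_pow_diag: "m2_pow s (M2 x 0 0 y) n = M2 (x^n) 0 0 (y^n)"
  by (induction n) (auto simp: m2_one_def)

lemma m2_nilpotent_diag: "m2_nilpotent s (M2 x 0 0 y) \<longleftrightarrow> nilpotent x \<and> nilpotent y"
proof
  assume "m2_nilpotent s (M2 x 0 0 y)"
  then show "nilpotent x \<and> nilpotent y"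
    unfolding m2_nilpotent_def nilpotent_def m2_pow_diag m2_zero_def by auto
next
  assume "nilpotent x \<and> nilpotent y"
  then obtain n m where "x^n = 0" "y^m = 0" unfolding nilpotent_def by auto
  then have "x^(n+m) = 0" "y^(n+m) = 0" by (auto simp: power_add)
  then show "m2_nilpotent s (M2 x 0 0 y)"
    unfolding m2_nilpotent_def m2_pow_diag m2_zero_def by auto
qed

context
  fixes s :: "'a::ring_1"
  assumes cs: "central s"
begin

lemma m2_assoc:
  "m2_mult s (m2_mult s X Y) Z = m2_mult s X (m2_mult s Y Z)"
  using central_pow2[OF cs] central_pow2'[OF cs]
  by (cases X; cases Y; cases Z) (simp add: algebra_simps central_pow2'[OF cs])

lemma m2_pow_conj:
  assumes PQ: "m2_mult s P Q = m2_one"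
  shows "m2_pow s (m2_mult s Q (m2_mult s X P)) (Suc n) = m2_mult s Q (m2_mult s (m2_pow s X (Suc n)) P)"
proof (induction n)
  case 0 then show ?case by simp
next
  case (Suc n)
  have "m2_pow s (m2_mult s Q (m2_mult s X P)) (Suc (Suc n)) =
     m2_mult s (m2_mult s Q (m2_mult s X P)) (m2_mult s Q (m2_mult s (m2_pow s X (Suc n)) P))"
    using Suc by simp
  also have "\<dots> = m2_mult s Q (m2_mult s X (m2_mult s (m2_mult s P Q) (m2_mult s (m2_pow s X (Suc n)) P)))"
    by (simp add: m2_assoc)
  also have "\<dots> = m2_mult s Q (m2_mult s (m2_pow s X (Suc (Suc n))) P)"
    using PQ by (simp add: m2_assoc)
  finally show ?case .
qed

lemma m2_nilpotent_conj:
  assumes PQ: "m2_mult s P Q = m2_one" and N: "m2_nilpotent s X"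
  shows "m2_nilpotent s (m2_mult s Q (m2_mult s X P))"
proof -
  obtain n where n: "m2_pow s X n = m2_zero" using N unfolding m2_nilpotent_def by auto
  have "m2_pow s X (Suc n) = m2_zero" using n by simp
  then have "m2_pow s (m2_mult s Q (m2_mult s X P)) (Suc n) = m2_zero"
    using m2_pow_conj[OF PQ, of X n] by simp
  then show ?thesis unfolding m2_nilpotent_def by blast
qed

lemma m2_unit_mult:
  assumes "m2_unit s P" "m2_unit s R"
  shows "m2_unit s (m2_mult s P R)"
proof -
  obtain Q S where Q: "m2_mult s P Q = m2_one" "m2_mult s Q P = m2_one"
    and S: "m2_mult s R S = m2_one" "m2_mult s S R = m2_one" using assms unfolding m2_unit_def by blast
  have "m2_mult s (m2_mult s P R) (m2_mult s S Q) = m2_one"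
    by (simp add: m2_assoc Q S flip: m2_assoc[of R S])
  moreover have "m2_mult s (m2_mult s S Q) (m2_mult s P R) = m2_one"
    by (simp add: m2_assoc Q S flip: m2_assoc[of Q P])
  ultimately show ?thesis unfolding m2_unit_def by blast
qed

lemma sim_snc:
  assumes sim: "m2_similar s A B" and snc: "m2_strongly_nil_clean s B"
  shows "m2_strongly_nil_clean s A"
proof -
  obtain P Q where PQ: "m2_mult s P Q = m2_one" "m2_mult s Q P = m2_one"
    and B: "B = m2_mult s Q (m2_mult s A P)" using sim unfolding m2_similar_def by blast
  obtain F where F: "m2_mult s F F = F" "m2_mult s B F = m2_mult s F B" "m2_nilpotent s (m2_diff B F)"
    using snc unfolding m2_strongly_nil_clean_def m2_idempotent_def by blast
  define E where "E = m2_mult s P (m2_mult s F Q)"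
  have A: "A = m2_mult s P (m2_mult s B Q)"
    using PQ by (simp add: B m2_assoc flip: m2_assoc[of P Q])
  have "m2_mult s E E = m2_mult s P (m2_mult s F (m2_mult s (m2_mult s Q P) (m2_mult s F Q)))"
    by (simp add: E_def m2_assoc)
  also have "\<dots> = E" using PQ F(1) by (simp add: E_def flip: m2_assoc[of F F])
  finally have E1: "m2_mult s E E = E" .
  have "m2_mult s A E = m2_mult s P (m2_mult s B (m2_mult s (m2_mult s Q P) (m2_mult s F Q)))"
    by (simp add: A E_def m2_assoc)
  also have "\<dots> = m2_mult s P (m2_mult s (m2_mult s B F) Q)" using PQ by (simp add: m2_assoc)
  also have "\<dots> = m2_mult s P (m2_mult s (m2_mult s F B) Q)" using F(2) by simp
  also have "\<dots> = m2_mult s P (m2_mult s F (m2_mult s (m2_mult s Q P) (m2_mult s B Q)))"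
    using PQ by (simp add: m2_assoc)
  also have "\<dots> = m2_mult s E A" by (simp add: A E_def m2_assoc)
  finally have E2: "m2_mult s A E = m2_mult s E A" .
  have "m2_diff A E = m2_mult s P (m2_mult s (m2_diff B F) Q)"
    by (simp add: A E_def m2_diff_left m2_diff_right)
  then have E3: "m2_nilpotent s (m2_diff A E)" using m2_nilpotent_conj[OF PQ(2) F(3)] by simp
  show ?thesis unfolding m2_strongly_nil_clean_def m2_idempotent_def using E1 E2 E3 by blast
qed

lemma sim_trans:
  assumes "m2_similar s A B" "m2_similar s B C"
  shows "m2_similar s A C"
proof -
  obtain P Q where PQ: "m2_mult s P Q = m2_one" "m2_mult s Q P = m2_one"
    and B: "B = m2_mult s Q (m2_mult s A P)" using assms unfolding m2_similar_def by blast
  obtain P' Q' where PQ': "m2_mult s P' Q' = m2_one" "m2_mult s Q' P' = m2_one"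
    and C: "C = m2_mult s Q' (m2_mult s B P')" using assms unfolding m2_similar_def by blast
  have "m2_mult s (m2_mult s P P') (m2_mult s Q' Q) = m2_one"
    by (simp add: m2_assoc PQ PQ' flip: m2_assoc[of P' Q'])
  moreover have "m2_mult s (m2_mult s Q' Q) (m2_mult s P P') = m2_one"
    by (simp add: m2_assoc PQ PQ' flip: m2_assoc[of Q P])
  moreover have "C = m2_mult s (m2_mult s Q' Q) (m2_mult s A (m2_mult s P P'))"
    by (simp add: B C m2_assoc)
  ultimately show ?thesis unfolding m2_similar_def by blast
qed

end


context
  fixes s :: "'a::ring_1"
  assumes cs: "central s"
begin

lemma schur:
  assumes ai: "\<alpha> * ai = 1" "ai * \<alpha> = 1"
    and si: "S * si = 1" "si * S = 1"
    and S: "S = \<delta> - s^2 * \<gamma> * ai * \<beta>"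
  shows "m2_unit s (M2 \<alpha> \<beta> \<gamma> \<delta>)"
proof -
  have L: "m2_unit s (M2 1 0 (\<gamma> * ai) 1)"
    unfolding m2_unit_def by (rule exI[of _ "M2 1 0 (- (\<gamma> * ai)) 1"]) (simp add: m2_one_def)
  have D: "m2_unit s (M2 \<alpha> 0 0 S)"
    unfolding m2_unit_def by (rule exI[of _ "M2 ai 0 0 si"]) (simp add: m2_one_def ai si)
  have U: "m2_unit s (M2 1 (ai * \<beta>) 0 1)"
    unfolding m2_unit_def by (rule exI[of _ "M2 1 (- (ai * \<beta>)) 0 1"]) (simp add: m2_one_def)
  have a1: "\<alpha> * (ai * x) = x" "\<gamma> * ai * \<alpha> = \<gamma>" for x
    using ai by (metis mult.assoc mult_1) (metis ai(2) mult.assoc mult.right_neutral)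
  have "M2 \<alpha> \<beta> \<gamma> \<delta> = m2_mult s (M2 1 0 (\<gamma> * ai) 1) (m2_mult s (M2 \<alpha> 0 0 S) (M2 1 (ai * \<beta>) 0 1))"
    by (simp add: a1 S mult.assoc ai)
  then show ?thesis using m2_unit_mult[OF cs] L D U by metis
qed

end


context
  fixes s :: "'a::ring_1"
  assumes cs: "central s" and loc: "local_ring TYPE('a)"
begin

lemma idem_zero_case:
  assumes e1: "a * a + s^2 * b * c = a" and e2: "a * b + b * d = b"
    and e3: "c * a + d * c = c" and e4: "s^2 * c * b + d * d = d"
    and aJ: "a \<in> jacobson" and dJ: "d \<in> jacobson"
  shows "M2 a b c d = m2_zero"
proof -
  have bJ: "b \<in> jacobson"
  proof -
    have "a * b \<in> jacobson" using jac_right[OF loc aJ] .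
    moreover have "b * d \<in> jacobson" using jac_closed(2)[OF dJ dJ, of b] .
    ultimately have "a * b + b * d \<in> jacobson" by (rule jac_closed(3))
    then show ?thesis using e2 by simp
  qed
  obtain ai where ai: "(1 - a) * ai = 1" "ai * (1 - a) = 1"
    using one_minus_unit[OF loc aJ] unfolding is_unit_def by blast
  define S where "S = (1 - d) - s^2 * (- c) * ai * (- b)"
  have mb: "- b \<in> jacobson" using jac_closed(4)[OF bJ bJ] .
  have "s^2 * (- c) * ai * (- b) \<in> jacobson" using jac_closed(2)[OF mb mb, of "s^2 * (- c) * ai"] .
  then have "d + s^2 * (- c) * ai * (- b) \<in> jacobson" using jac_closed(3)[OF dJ] by blast
  then have "S \<notin> jacobson" using one_minus_jac[OF loc] by (simp add: S_def diff_diff_eq)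
  then obtain si where si: "S * si = 1" "si * S = 1" using local_unit[OF loc] unfolding is_unit_def by blast
  have "m2_unit s (M2 (1 - a) (- b) (- c) (1 - d))"
    using schur[OF cs ai si S_def] .
  then obtain W where W: "m2_mult s W (M2 (1 - a) (- b) (- c) (1 - d)) = m2_one"
    unfolding m2_unit_def by blast
  have Z: "m2_mult s (M2 (1 - a) (- b) (- c) (1 - d)) (M2 a b c d) = m2_zero"
    using e1 e2 e3 e4 by (simp add: m2_zero_def algebra_simps)
  have "M2 a b c d = m2_mult s (m2_mult s W (M2 (1 - a) (- b) (- c) (1 - d))) (M2 a b c d)"
    using W by simp
  also have "\<dots> = m2_mult s W (m2_mult s (M2 (1 - a) (- b) (- c) (1 - d)) (M2 a b c d))"
    by (rule m2_assoc[OF cs])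
  also have "\<dots> = m2_zero" by (simp only: Z m2_zero_right)
  finally show ?thesis .
qed

lemma idem_unit_case:
  assumes e1: "a * a + s^2 * b * c = a" and e2: "a * b + b * d = b"
    and e3: "c * a + d * c = c" and e4: "s^2 * c * b + d * d = d"
    and aU: "a \<notin> jacobson" and dU: "1 - d \<notin> jacobson"
  shows "m2_unit s (M2 a (- b) c (1 - d)) \<and>
     m2_mult s (M2 a b c d) (M2 a (- b) c (1 - d)) = m2_mult s (M2 a (- b) c (1 - d)) (M2 1 0 0 0)"
proof
  obtain ai where ai: "a * ai = 1" "ai * a = 1"
    using local_unit[OF loc aU] unfolding is_unit_def by blast
  obtain ui where ui: "(1 - d) * ui = 1" "ui * (1 - d) = 1"
    using local_unit[OF loc dU] unfolding is_unit_def by blast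
  define S where "S = (1 - d) - s^2 * c * ai * (- b)"
  have c1: "(1 - d) * c = c * a" using e3 by (simp add: algebra_simps)
  have "(1 - d) * (s^2 * c * ai * b) = s^2 * ((1 - d) * c) * ai * b"
    using central_pow2'[OF cs] by (simp add: mult.assoc)
  also have "\<dots> = s^2 * c * b" using c1 ai by (simp add: mult.assoc)
  also have "\<dots> = d - d * d" using e4 by (simp add: algebra_simps)
  finally have k: "(1 - d) * (s^2 * c * ai * b) = d - d * d" .
  have "(1 - d) * (S - 1) = 0"
    unfolding S_def using k by (simp add: algebra_simps)
  then have "ui * ((1 - d) * (S - 1)) = 0" by simp
  then have "S = 1" using ui by (simp add: mult.assoc[symmetric])
  then show "m2_unit s (M2 a (- b) c (1 - d))"
    using schur[OF cs ai, of S 1] S_def by simp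
  show "m2_mult s (M2 a b c d) (M2 a (- b) c (1 - d)) = m2_mult s (M2 a (- b) c (1 - d)) (M2 1 0 0 0)"
    using e1 e2 e3 e4 by (simp add: algebra_simps)
qed



lemma idem_class:
  assumes "m2_idempotent s E"
  shows "E = m2_zero \<or> E = m2_one \<or>
    (\<exists>U. m2_unit s U \<and> m2_mult s E U = m2_mult s U (M2 1 0 0 0)) \<or>
    (\<exists>U. m2_unit s U \<and> m2_mult s E U = m2_mult s U (M2 0 0 0 1))"
proof -
  obtain a b c d where E: "E = M2 a b c d" by (cases E)
  have e: "a * a + s^2 * b * c = a" "a * b + b * d = b"
    "c * a + d * c = c" "s^2 * c * b + d * d = d"
    using assms unfolding m2_idempotent_def E by simp_all
  have f: "(1 - a) * (1 - a) + s^2 * (- b) * (- c) = 1 - a"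
     "(1 - a) * (- b) + (- b) * (1 - d) = - b"
     "(- c) * (1 - a) + (1 - d) * (- c) = - c"
     "s^2 * (- c) * (- b) + (1 - d) * (1 - d) = 1 - d"
    using e by (simp_all add: algebra_simps)
  consider "a \<notin> jacobson \<and> 1 - d \<notin> jacobson" | "1 - a \<notin> jacobson \<and> d \<notin> jacobson"
    | "a \<in> jacobson \<and> d \<in> jacobson" | "1 - a \<in> jacobson \<and> 1 - d \<in> jacobson"
    using one_minus_jac[OF loc] by (metis diff_diff_cancel)
  then show ?thesis
  proof cases
    case 1
    then show ?thesis using idem_unit_case[OF e] E by blast
  next
    case 2
    then have "1 - a \<notin> jacobson" "1 - (1 - d) \<notin> jacobson" by auto
    from idem_unit_case[OF f this]
    have "m2_unit s (M2 (1 - a) b (- c) d)" by simp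
    moreover have "m2_mult s E (M2 (1 - a) b (- c) d) = m2_mult s (M2 (1 - a) b (- c) d) (M2 0 0 0 1)"
      using e unfolding E by (simp add: algebra_simps)
    ultimately show ?thesis by blast
  next
    case 3
    then show ?thesis using idem_zero_case[OF e] E by blast
  next
    case 4
    then have "M2 (1 - a) (- b) (- c) (1 - d) = m2_zero" using idem_zero_case[OF f] by blast
    then have "E = m2_one" unfolding E m2_zero_def m2_one_def by simp
    then show ?thesis by blast
  qed
qed

lemma diag_from_conj:
  assumes EU: "m2_mult s E U = m2_mult s U F" and UV: "m2_mult s U V = m2_one" "m2_mult s V U = m2_one"
    and AE: "m2_mult s A E = m2_mult s E A" and N: "m2_nilpotent s (m2_diff A E)"
  shows "m2_similar s A (m2_mult s V (m2_mult s A U))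
    \<and> m2_mult s (m2_mult s V (m2_mult s A U)) F = m2_mult s F (m2_mult s V (m2_mult s A U))
    \<and> m2_nilpotent s (m2_diff (m2_mult s V (m2_mult s A U)) F)"
proof (intro conjI)
  show "m2_similar s A (m2_mult s V (m2_mult s A U))"
    unfolding m2_similar_def using UV by blast
  have VE: "m2_mult s V E = m2_mult s F V"
  proof -
    have "m2_mult s V E = m2_mult s V (m2_mult s (m2_mult s E U) V)"
      using UV by (simp add: m2_assoc[OF cs])
    also have "\<dots> = m2_mult s F V" using UV by (simp add: EU m2_assoc[OF cs] flip: m2_assoc[OF cs, of V U])
    finally show ?thesis .
  qed
  have VEU: "m2_mult s V (m2_mult s E U) = F"
    using UV by (simp add: EU flip: m2_assoc[OF cs])
  show "m2_mult s (m2_mult s V (m2_mult s A U)) F = m2_mult s F (m2_mult s V (m2_mult s A U))"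
  proof -
    have "m2_mult s (m2_mult s V (m2_mult s A U)) F = m2_mult s V (m2_mult s A (m2_mult s U F))"
      by (simp add: m2_assoc[OF cs])
    also have "\<dots> = m2_mult s V (m2_mult s (m2_mult s A E) U)" by (simp add: EU m2_assoc[OF cs])
    also have "\<dots> = m2_mult s (m2_mult s V E) (m2_mult s A U)" by (simp add: AE m2_assoc[OF cs])
    also have "\<dots> = m2_mult s F (m2_mult s V (m2_mult s A U))" by (simp add: VE m2_assoc[OF cs])
    finally show ?thesis .
  qed
  have "m2_diff (m2_mult s V (m2_mult s A U)) F = m2_mult s V (m2_mult s (m2_diff A E) U)"
    using VEU by (simp add: m2_diff_left m2_diff_right)
  then show "m2_nilpotent s (m2_diff (m2_mult s V (m2_mult s A U)) F)"
    using m2_nilpotent_conj[OF cs UV(1) N] by simp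
qed

lemma snc_forward:
  assumes "m2_strongly_nil_clean s A"
  shows "m2_nilpotent s A \<or> m2_nilpotent s (m2_diff m2_one A)
    \<or> (\<exists>v w. nilpotent (v - 1) \<and> nilpotent w \<and> m2_similar s A (M2 v 0 0 w))
    \<or> (\<exists>v w. nilpotent (v - 1) \<and> nilpotent w \<and> m2_similar s A (M2 w 0 0 v))"
proof -
  obtain E where E: "m2_idempotent s E" "m2_mult s A E = m2_mult s E A" "m2_nilpotent s (m2_diff A E)"
    using assms unfolding m2_strongly_nil_clean_def by blast
  from idem_class[OF E(1)] show ?thesis
  proof (elim disjE exE conjE)
    assume "E = m2_zero" then show ?thesis using E by simp
  next
    assume "E = m2_one"
    then have "m2_nilpotent s (m2_diff m2_zero (m2_diff A m2_one))" using E m2_nilpotent_neg by blast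
    moreover have "m2_diff m2_zero (m2_diff A m2_one) = m2_diff m2_one A"
      by (cases A) (simp add: m2_zero_def m2_one_def)
    ultimately show ?thesis by simp
  next
    fix U assume U: "m2_unit s U" "m2_mult s E U = m2_mult s U (M2 1 0 0 0)"
    then obtain V where UV: "m2_mult s U V = m2_one" "m2_mult s V U = m2_one" unfolding m2_unit_def by blast
    obtain p q r t where B: "m2_mult s V (m2_mult s A U) = M2 p q r t" by (metis m2.exhaust)
    have D: "m2_similar s A (M2 p q r t)" "m2_mult s (M2 p q r t) (M2 1 0 0 0) = m2_mult s (M2 1 0 0 0) (M2 p q r t)"
      "m2_nilpotent s (m2_diff (M2 p q r t) (M2 1 0 0 0))"
      using diag_from_conj[OF U(2) UV E(2,3)] B by auto
    have "q = 0" "r = 0" using D(2) by auto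
    then have "nilpotent (p - 1)" "nilpotent t" "m2_similar s A (M2 p 0 0 t)"
      using D(1,3) m2_nilpotent_diag by auto
    then show ?thesis by blast
  next
    fix U assume U: "m2_unit s U" "m2_mult s E U = m2_mult s U (M2 0 0 0 1)"
    then obtain V where UV: "m2_mult s U V = m2_one" "m2_mult s V U = m2_one" unfolding m2_unit_def by blast
    obtain p q r t where B: "m2_mult s V (m2_mult s A U) = M2 p q r t" by (metis m2.exhaust)
    have D: "m2_similar s A (M2 p q r t)" "m2_mult s (M2 p q r t) (M2 0 0 0 1) = m2_mult s (M2 0 0 0 1) (M2 p q r t)"
      "m2_nilpotent s (m2_diff (M2 p q r t) (M2 0 0 0 1))"
      using diag_from_conj[OF U(2) UV E(2,3)] B by auto
    have "q = 0" "r = 0" using D(2) by auto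
    then have "nilpotent (t - 1)" "nilpotent p" "m2_similar s A (M2 p 0 0 t)"
      using D(1,3) m2_nilpotent_diag by auto
    then show ?thesis by blast
  qed
qed

end


lemma local_dich:
  fixes s :: "'a::ring_1"
  assumes "local_ring TYPE('a)"
  shows "is_unit s \<or> s \<in> jacobson"
  using local_unit[OF assms] by blast

lemma swap_similar:
  fixes s :: "'a::ring_1"
  assumes cs: "central s" and u: "is_unit s"
  shows "m2_similar s (M2 w 0 0 v) (M2 v 0 0 w)"
proof -
  obtain si where si: "s * si = 1" "si * s = 1" using u unfolding is_unit_def by blast
  define t where "t = si * si"
  have st: "s^2 * t = 1" unfolding t_def power2_eq_square using si
    by (metis mult.assoc mult_1)
  have ts: "t * s^2 = 1" using st central_pow2[OF cs, of t] by simp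
  have sv: "s^2 * x * t = x" for x
    using central_pow2[OF cs, of x] st by (metis mult.assoc mult.right_neutral)
  have sv2: "s^2 * (t * x) = x" for x
    using st by (metis mult.assoc mult_1)
  let ?P = "M2 0 1 t 0"
  have "m2_mult s ?P ?P = m2_one" using st ts by (simp add: m2_one_def mult.assoc)
  moreover have "M2 v 0 0 w = m2_mult s ?P (m2_mult s (M2 w 0 0 v) ?P)"
    by (simp add: sv sv2 mult.assoc[symmetric]) (simp add: mult.assoc sv2)
  ultimately show ?thesis unfolding m2_similar_def by blast
qed

lemma diag_snc:
  fixes s :: "'a::ring_1"
  assumes "nilpotent (v - 1)" "nilpotent w"
  shows "m2_strongly_nil_clean s (M2 v 0 0 w)" "m2_strongly_nil_clean s (M2 w 0 0 v)"
proof -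
  have "m2_diff (M2 v 0 0 w) (M2 1 0 0 0) = M2 (v - 1) 0 0 w" by simp
  then show "m2_strongly_nil_clean s (M2 v 0 0 w)"
    unfolding m2_strongly_nil_clean_def m2_idempotent_def
    using assms m2_nilpotent_diag[of s "v - 1" w]
    by (intro exI[of _ "M2 1 0 0 0"]) simp
  have "m2_diff (M2 w 0 0 v) (M2 0 0 0 1) = M2 w 0 0 (v - 1)" by simp
  then show "m2_strongly_nil_clean s (M2 w 0 0 v)"
    unfolding m2_strongly_nil_clean_def m2_idempotent_def
    using assms m2_nilpotent_diag[of s w "v - 1"]
    by (intro exI[of _ "M2 0 0 0 1"]) simp
qed

theorem lemma2p9:
  fixes s :: "'a::ring_1" and A :: "'a m2"
  assumes "local_ring TYPE('a)"
    and "central s"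
  shows "m2_strongly_nil_clean s A \<longleftrightarrow>
     m2_nilpotent s A
   \<or> m2_nilpotent s (m2_diff m2_one A)
   \<or> (is_unit s \<and> (\<exists>v w. nilpotent (v - 1) \<and> nilpotent w \<and> m2_similar s A (M2 v 0 0 w)))
   \<or> (s \<in> jacobson \<and> (\<exists>v w. nilpotent (v - 1) \<and> nilpotent w \<and>
          (m2_similar s A (M2 v 0 0 w) \<or> m2_similar s A (M2 w 0 0 v))))"
proof
  assume snc: "m2_strongly_nil_clean s A"
  have dich: "is_unit s \<or> s \<in> jacobson" using local_dich[OF assms(1)] .
  from snc_forward[OF assms(2,1) snc] show "m2_nilpotent s A
   \<or> m2_nilpotent s (m2_diff m2_one A)
   \<or> (is_unit s \<and> (\<exists>v w. nilpotent (v - 1) \<and> nilpotent w \<and> m2_similar s A (M2 v 0 0 w)))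
   \<or> (s \<in> jacobson \<and> (\<exists>v w. nilpotent (v - 1) \<and> nilpotent w \<and>
          (m2_similar s A (M2 v 0 0 w) \<or> m2_similar s A (M2 w 0 0 v))))"
  proof (elim disjE exE conjE)
    fix v w assume h: "nilpotent (v - 1)" "nilpotent w" "m2_similar s A (M2 w 0 0 v)"
    show ?thesis
    proof (cases "is_unit s")
      case True
      then have "m2_similar s A (M2 v 0 0 w)"
        using sim_trans[OF assms(2) h(3) swap_similar[OF assms(2) True]] by simp
      then show ?thesis using True h by blast
    next
      case False
      then show ?thesis using dich h by blast
    qed
  qed (use dich in blast)+
next
  assume "m2_nilpotent s A
   \<or> m2_nilpotent s (m2_diff m2_one A)
   \<or> (is_unit s \<and> (\<exists>v w. nilpotent (v - 1) \<and> nilpotent w \<and> m2_similar s A (M2 v 0 0 w)))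
   \<or> (s \<in> jacobson \<and> (\<exists>v w. nilpotent (v - 1) \<and> nilpotent w \<and>
          (m2_similar s A (M2 v 0 0 w) \<or> m2_similar s A (M2 w 0 0 v))))"
  then show "m2_strongly_nil_clean s A"
  proof (elim disjE exE conjE)
    assume "m2_nilpotent s A"
    then show ?thesis unfolding m2_strongly_nil_clean_def m2_idempotent_def
      by (intro exI[of _ m2_zero]) simp
  next
    assume N: "m2_nilpotent s (m2_diff m2_one A)"
    have "m2_diff A m2_one = m2_diff m2_zero (m2_diff m2_one A)"
      by (cases A) (simp add: m2_zero_def m2_one_def)
    then have "m2_nilpotent s (m2_diff A m2_one)" using m2_nilpotent_neg[OF N] by simp
    then show ?thesis unfolding m2_strongly_nil_clean_def m2_idempotent_def
      by (intro exI[of _ m2_one]) simp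
  next
    fix v w assume "nilpotent (v - 1)" "nilpotent w" "m2_similar s A (M2 v 0 0 w)"
    then show ?thesis using sim_snc[OF assms(2)] diag_snc by blast
  next
    fix v w assume "nilpotent (v - 1)" "nilpotent w" "m2_similar s A (M2 v 0 0 w)"
    then show ?thesis using sim_snc[OF assms(2)] diag_snc by blast
  next
    fix v w assume "nilpotent (v - 1)" "nilpotent w" "m2_similar s A (M2 w 0 0 v)"
    then show ?thesis using sim_snc[OF assms(2)] diag_snc by blast
  qed
qed

end
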